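(* Let $\mathcal{X},\mathcal{Y}$ be finite sets, $p(X,Y)$ a fully supported probability distribution on $\mathcal{X}\times\mathcal{Y}$, and $0\le\lambda\le I(X;Y)$. For $\kappa_{\mathcal{X}}\in C(\mathcal{X},\mathbb{N})$ let $\kappa=\kappa_{\mathcal{X}}\otimes e_{\mathcal{Y}}\in C(\mathcal{X}\times\mathcal{Y},\mathbb{N}\times\mathcal{Y})$ be the channel $\kappa(t,y'|x,y)=\kappa_{\mathcal{X}}(t|x)\,\delta_{y'=y}$, and let $C_{\mathrm{IB}(X,Y)}$ be the set of all such channels. Consider: (A) the problem of minimising $I_\kappa(X,Y;T)$ over $\kappa\in C_{\mathrm{IB}(X,Y)}$ subject to $D(\kappa(p(X,Y))\|\kappa(p(X)p(Y)))=\lambda$, where $T$ is the output of $\kappa$ (with values in $\mathbb{N}\times\mathcal{Y}$) and the mutual information is computed from $p(x,y)\kappa(t|x,y)$; (B) the Information Bottleneck problem of minimising $I_q(X;T_{\mathrm{IB}})$ over $q(T_{\mathrm{IB}}|X)\in C(\mathcal{X},\mathbb{N})$ subject to $I_q(Y;T_{\mathrm{IB}})\ge\lambda$, where the information quantities are computed from $q(x,y,t)=p(x,y)q(t|x)$. Then $\kappa_{\mathcal{X}}\otimes e_{\mathcal{Y}}$ is a solution (minimiser) of (A) if and only if $\kappa_{\mathcal{X}}$ is a solution of (B).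
   Context: For sets $\mathcal{A},\mathcal{B}$, $C(\mathcal{A},\mathcal{B})$ denotes the set of channels (conditional probabilities) from $\mathcal{A}$ to $\mathcal{B}$. For a channel $\kappa$ and a distribution $r$ on its input space, $\kappa(r)$ denotes the output distribution $\sum_{a}\kappa(\cdot|a)r(a)$. $D$ is the Kullback–Leibler divergence and $p(X),p(Y)$ are the marginals of $p(X,Y)$. *)

theory Defs
  imports "HOL-Analysis.Analysis"
begin

definition channel :: "('a \<Rightarrow> 'b \<Rightarrow> real) \<Rightarrow> bool" where
  "channel k \<longleftrightarrow> (\<forall>a. (\<forall>b. 0 \<le> k a b) \<and> (k a has_sum 1) UNIV)"

definition apply_chan :: "('a::finite \<Rightarrow> 'b \<Rightarrow> real) \<Rightarrow> ('a \<Rightarrow> real) \<Rightarrow> 'b \<Rightarrow> real" where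
  "apply_chan k r = (\<lambda>b. \<Sum>a\<in>UNIV. k a b * r a)"

text \<open>Kullback-Leibler divergence of (countably supported) distributions, natural log,
  convention 0 ln 0 = 0; value +infinity if not absolutely continuous or the series diverges.\<close>
definition kl_div :: "('b \<Rightarrow> real) \<Rightarrow> ('b \<Rightarrow> real) \<Rightarrow> ereal" where
  "kl_div P Q =
     (if (\<forall>b. P b \<noteq> 0 \<longrightarrow> Q b \<noteq> 0) \<and> (\<lambda>b. P b * ln (P b / Q b)) summable_on UNIV
      then ereal (\<Sum>\<^sub>\<infinity>b. P b * ln (P b / Q b)) else \<infinity>)"

definition marg1 :: "('a \<times> 'b \<Rightarrow> real) \<Rightarrow> 'a \<Rightarrow> real" where
  "marg1 J a = (\<Sum>\<^sub>\<infinity>b. J (a, b))"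

definition marg2 :: "('a \<times> 'b \<Rightarrow> real) \<Rightarrow> 'b \<Rightarrow> real" where
  "marg2 J b = (\<Sum>\<^sub>\<infinity>a. J (a, b))"

definition mutual_info :: "('a \<times> 'b \<Rightarrow> real) \<Rightarrow> ereal" where
  "mutual_info J = kl_div J (\<lambda>(a, b). marg1 J a * marg2 J b)"

definition ib_ext :: "('x \<Rightarrow> nat \<Rightarrow> real) \<Rightarrow> ('x \<times> 'y) \<Rightarrow> (nat \<times> 'y) \<Rightarrow> real" where
  "ib_ext kX = (\<lambda>(x, y) (t, y'). kX x t * (if y' = y then 1 else 0))"

definition C_IB :: "(('x \<times> 'y) \<Rightarrow> (nat \<times> 'y) \<Rightarrow> real) set" where
  "C_IB = {ib_ext kX | kX. channel kX}"

definition objA :: "('x::finite \<times> 'y::finite \<Rightarrow> real) \<Rightarrow> (('x \<times> 'y) \<Rightarrow> (nat \<times> 'y) \<Rightarrow> real) \<Rightarrow> ereal" where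
  "objA p k = mutual_info (\<lambda>(xy, t). p xy * k xy t)"

definition constrA :: "('x::finite \<times> 'y::finite \<Rightarrow> real) \<Rightarrow> real \<Rightarrow> (('x \<times> 'y) \<Rightarrow> (nat \<times> 'y) \<Rightarrow> real) \<Rightarrow> bool" where
  "constrA p lam k \<longleftrightarrow>
     kl_div (apply_chan k p) (apply_chan k (\<lambda>(x, y). marg1 p x * marg2 p y)) = ereal lam"

definition solves_A where
  "solves_A p lam k \<longleftrightarrow> k \<in> C_IB \<and> constrA p lam k \<and>
     (\<forall>k'\<in>C_IB. constrA p lam k' \<longrightarrow> objA p k \<le> objA p k')"

definition objB :: "('x::finite \<times> 'y::finite \<Rightarrow> real) \<Rightarrow> ('x \<Rightarrow> nat \<Rightarrow> real) \<Rightarrow> ereal" where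
  "objB p q = mutual_info (\<lambda>(x, t). \<Sum>y\<in>UNIV. p (x, y) * q x t)"

definition constrB :: "('x::finite \<times> 'y::finite \<Rightarrow> real) \<Rightarrow> real \<Rightarrow> ('x \<Rightarrow> nat \<Rightarrow> real) \<Rightarrow> bool" where
  "constrB p lam q \<longleftrightarrow> ereal lam \<le> mutual_info (\<lambda>(y, t). \<Sum>x\<in>UNIV. p (x, y) * q x t)"

definition solves_B where
  "solves_B p lam q \<longleftrightarrow> channel q \<and> constrB p lam q \<and>
     (\<forall>q'. channel q' \<longrightarrow> constrB p lam q' \<longrightarrow> objB p q \<le> objB p q')"

end

theory Submission
  imports Defs
begin


lemma has_sum_sum_fin:
  fixes f :: "'i \<Rightarrow> 'a \<Rightarrow> real"
  assumes "finite I" "\<And>i. i \<in> I \<Longrightarrow> (f i has_sum s i) A"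
  shows "((\<lambda>a. \<Sum>i\<in>I. f i a) has_sum (\<Sum>i\<in>I. s i)) A"
  using assms
proof (induction I rule: finite_induct)
  case empty then show ?case by simp
next
  case (insert j I)
  have "((\<lambda>a. f j a + (\<Sum>i\<in>I. f i a)) has_sum (s j + (\<Sum>i\<in>I. s i))) A"
    by (rule has_sum_add) (use insert in auto)
  then show ?case using insert by simp
qed

lemma has_sum_diff_real:
  fixes f g :: "'a \<Rightarrow> real"
  assumes "(f has_sum s) A" "(g has_sum t) A"
  shows "((\<lambda>a. f a - g a) has_sum (s - t)) A"
proof -
  have "((\<lambda>a. - g a) has_sum (- t)) A" using assms(2) by (simp add: has_sum_uminus)
  from has_sum_add[OF assms(1) this] show ?thesis by simp
qed

lemma has_sum_prod_fin1:
  fixes f :: "'a::finite \<times> 'b \<Rightarrow> real"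
  assumes "\<And>a. ((\<lambda>b. f (a, b)) has_sum s a) UNIV"
  shows "(f has_sum (\<Sum>a\<in>UNIV. s a)) UNIV"
proof -
  have "(f has_sum s a) ({a} \<times> UNIV)" for a
  proof -
    have "inj_on (Pair a) UNIV" by (auto simp: inj_on_def)
    moreover have "Pair a ` (UNIV::'b set) = {a} \<times> UNIV" by auto
    then have "(f has_sum s a) (Pair a ` UNIV)"
      by (subst has_sum_reindex) (auto simp: o_def assms inj_on_def)
    then show ?thesis using \<open>Pair a ` (UNIV::'b set) = {a} \<times> UNIV\<close> by (simp only:)
  qed
  then have "(f has_sum (\<Sum>a\<in>UNIV. s a)) (\<Union>a\<in>UNIV. {a} \<times> UNIV)"
    by (intro sum_has_sum) auto
  moreover have "(\<Union>a\<in>(UNIV::'a set). {a} \<times> (UNIV::'b set)) = UNIV" by auto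
  ultimately show ?thesis by (simp only:)
qed

lemma has_sum_prod_fin2:
  fixes f :: "'a \<times> 'b::finite \<Rightarrow> real"
  assumes "\<And>b. ((\<lambda>a. f (a, b)) has_sum s b) UNIV"
  shows "(f has_sum (\<Sum>b\<in>UNIV. s b)) UNIV"
proof -
  have "(f has_sum s b) (UNIV \<times> {b})" for b
  proof -
    have "inj_on (\<lambda>a. (a, b)) UNIV" by (auto simp: inj_on_def)
    moreover have "(\<lambda>a. (a, b)) ` (UNIV::'a set) = UNIV \<times> {b}" by auto
    then have "(f has_sum s b) ((\<lambda>a. (a, b)) ` UNIV)"
      by (subst has_sum_reindex) (auto simp: o_def assms inj_on_def)
    then show ?thesis using \<open>(\<lambda>a. (a, b)) ` (UNIV::'a set) = UNIV \<times> {b}\<close> by (simp only:)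
  qed
  then have "(f has_sum (\<Sum>b\<in>UNIV. s b)) (\<Union>b\<in>UNIV. UNIV \<times> {b})"
    by (intro sum_has_sum) auto
  moreover have "(\<Union>b\<in>(UNIV::'b set). (UNIV::'a set) \<times> {b}) = UNIV" by auto
  ultimately show ?thesis by (simp only:)
qed

lemma has_sum_shift:
  fixes f :: "nat \<Rightarrow> real"
  assumes "(f has_sum s) UNIV"
  shows "((\<lambda>t. if t = 0 then 0 else f (t - 1)) has_sum s) UNIV"
proof -
  have "((\<lambda>t. if t = 0 then 0 else f (t - 1)) \<circ> Suc) = f" by (auto simp: o_def)
  with assms have "((\<lambda>t. if t = 0 then 0 else f (t - 1)) has_sum s) (Suc ` UNIV)"
    by (subst has_sum_reindex) auto
  moreover have "Suc ` UNIV = UNIV - {0}" by (auto simp: image_iff) (metis not0_implies_Suc)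
  ultimately show ?thesis
    by (subst (asm) has_sum_cong_neutral[where T = UNIV and g = "\<lambda>t. if t = 0 then 0 else f (t - 1)"]) auto
qed

lemma klI:
  assumes "\<And>b. P b \<noteq> 0 \<Longrightarrow> Q b \<noteq> 0"
    and "((\<lambda>b. P b * ln (P b / Q b)) has_sum s) UNIV"
  shows "kl_div P Q = ereal s"
  using assms unfolding kl_div_def
  by (auto simp: summable_on_def infsumI)

lemma xlnx_bound:
  fixes a b c :: real
  assumes "0 \<le> a" "0 < c" "c * a \<le> b"
  shows "\<bar>a * ln (a / b)\<bar> \<le> a * \<bar>ln c\<bar> + b"
proof (cases "a = 0")
  case True then show ?thesis using assms by simp
next
  case False
  then have a: "a > 0" using assms by simp
  then have b: "b > 0" using assms by (smt (verit) mult_pos_pos)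
  show ?thesis
  proof (cases "a \<ge> b")
    case True
    have "a / b \<le> 1 / c" using assms a b by (simp add: field_simps)
    then have "ln (a / b) \<le> ln (1 / c)" using a b by (intro ln_mono) auto
    also have "\<dots> = - ln c" using assms by (simp add: ln_div)
    finally have "ln (a/b) \<le> \<bar>ln c\<bar>" by simp
    moreover have "ln (a/b) \<ge> 0" using True a b by simp
    ultimately have "\<bar>a * ln (a/b)\<bar> \<le> a * \<bar>ln c\<bar>" using a
      by (simp add: abs_mult mult_left_mono)
    then show ?thesis using b by simp
  next
    case False
    have "ln (b / a) \<le> b / a - 1" using a b by (intro ln_le_minus_one) auto
    then have "a * ln (b / a) \<le> b - a" using a by (simp add: field_simps)
    moreover have "ln (a / b) = - ln (b / a)" using a b by (simp add: ln_div)
    moreover have "ln (b / a) \<ge> 0" using False a b by simp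
    ultimately have "\<bar>a * ln (a/b)\<bar> \<le> b - a" using a by (simp add: abs_mult)
    moreover have "a * \<bar>ln c\<bar> \<ge> 0" using a by simp
    ultimately show ?thesis using a by linarith
  qed
qed

lemma summable_xlnx:
  fixes a b :: "'t \<Rightarrow> real" and c :: real
  assumes "\<And>t. 0 \<le> a t" "0 < c" "\<And>t. c * a t \<le> b t"
    and "a summable_on UNIV" "b summable_on UNIV"
  shows "(\<lambda>t. a t * ln (a t / b t)) summable_on UNIV"
proof -
  have g: "(\<lambda>t. a t * \<bar>ln c\<bar> + b t) summable_on UNIV"
    by (rule summable_on_add[OF summable_on_cmult_left[OF assms(4)] assms(5)])
  have "(\<lambda>t. norm (a t * \<bar>ln c\<bar> + b t)) summable_on UNIV"
    using summable_on_iff_abs_summable_on_real[THEN iffD1, OF g] .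
  then have "(\<lambda>t. norm (a t * ln (a t / b t))) summable_on UNIV"
  proof (rule Infinite_Sum.abs_summable_on_comparison_test)
    fix t
    have "c * a t \<ge> 0" using assms(1)[of t] assms(2) by simp
    then have "b t \<ge> 0" using assms(3)[of t] by linarith
    then have "norm (a t * \<bar>ln c\<bar> + b t) = a t * \<bar>ln c\<bar> + b t"
      using assms(1)[of t] by simp
    moreover have "norm (a t * ln (a t / b t)) = \<bar>a t * ln (a t / b t)\<bar>" by simp
    ultimately show "norm (a t * ln (a t / b t)) \<le> norm (a t * \<bar>ln c\<bar> + b t)"
      using xlnx_bound[OF assms(1) assms(2) assms(3)] by presburger
  qed
  then show ?thesis by (rule summable_on_iff_abs_summable_on_real[THEN iffD2])
qed



lemma sum_pair:
  fixes f :: "'a::finite \<times> 'b::finite \<Rightarrow> 'c::comm_monoid_add"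
  shows "(\<Sum>z\<in>UNIV. f z) = (\<Sum>x\<in>UNIV. \<Sum>y\<in>UNIV. f (x, y))"
proof -
  have "(\<Sum>x\<in>UNIV. \<Sum>y\<in>UNIV. f (x, y)) = (\<Sum>(x,y)\<in>UNIV\<times>UNIV. f (x, y))"
    by (rule sum.cartesian_product)
  then show ?thesis by simp
qed

lemma xlnx_cancel: "(c * u) * ln ((c * u) / (c * v)) = c * (u * ln (u / v))" for c u v :: real
  by (cases "c = 0") auto

lemma has_sum_single0: "((\<lambda>t::nat. if t = 0 then c else 0) has_sum (c::real)) UNIV"
proof -
  have "((\<lambda>t::nat. if t = 0 then c else 0) has_sum c) {0}" by (simp add: has_sum_finite_iff)
  then show ?thesis by (subst (asm) has_sum_cong_neutral[where T = UNIV]) auto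
qed

locale ib =
  fixes p :: "'x::finite \<times> 'y::finite \<Rightarrow> real"
  assumes pos: "\<And>z. 0 < p z" and tot: "(\<Sum>z\<in>UNIV. p z) = 1"
begin

definition px where "px x = (\<Sum>y\<in>UNIV. p (x, y))"
definition py where "py y = (\<Sum>x\<in>UNIV. p (x, y))"
definition qt :: "('x \<Rightarrow> nat \<Rightarrow> real) \<Rightarrow> nat \<Rightarrow> real" where
  "qt k t = (\<Sum>x\<in>UNIV. px x * k x t)"
definition qyt :: "('x \<Rightarrow> nat \<Rightarrow> real) \<Rightarrow> 'y \<Rightarrow> nat \<Rightarrow> real" where
  "qyt k y t = (\<Sum>x\<in>UNIV. p (x, y) * k x t)"

lemma px_pos: "0 < px x"
  unfolding px_def using pos by (intro sum_pos) auto
lemma py_pos: "0 < py y"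
  unfolding py_def using pos by (intro sum_pos) auto
lemma sum_px: "(\<Sum>x\<in>UNIV. px x) = 1"
  using tot unfolding px_def by (simp add: sum_pair)
lemma sum_py: "(\<Sum>y\<in>UNIV. py y) = 1"
  using tot unfolding py_def sum_pair by (subst sum.swap) simp
lemma p_le_px: "p (x, y) \<le> px x"
  unfolding px_def using pos by (intro member_le_sum) (auto intro: less_imp_le)

context
  fixes k :: "'x \<Rightarrow> nat \<Rightarrow> real"
  assumes ch: "channel k"
begin

lemma k_nn: "0 \<le> k x t" using ch unfolding channel_def by auto
lemma k_sum: "(k x has_sum 1) UNIV" using ch unfolding channel_def by auto

lemma k_summ: "k x summable_on UNIV" using k_sum has_sum_imp_summable by blast

lemma qt_sum: "(qt k has_sum 1) UNIV"
proof -
  have "((\<lambda>t. \<Sum>x\<in>UNIV. px x * k x t) has_sum (\<Sum>x\<in>UNIV. px x * 1)) UNIV"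
    by (intro has_sum_sum_fin has_sum_cmult_right k_sum) auto
  then show ?thesis using sum_px by (simp add: qt_def[abs_def])
qed

lemma qyt_sum: "(qyt k y has_sum py y) UNIV"
proof -
  have "((\<lambda>t. \<Sum>x\<in>UNIV. p (x, y) * k x t) has_sum (\<Sum>x\<in>UNIV. p (x, y) * 1)) UNIV"
    by (intro has_sum_sum_fin has_sum_cmult_right k_sum) auto
  then show ?thesis by (simp add: qyt_def[abs_def] py_def)
qed

lemma qt_summ: "qt k summable_on UNIV" using qt_sum has_sum_imp_summable by blast
lemma qyt_summ: "qyt k y summable_on UNIV" using qyt_sum has_sum_imp_summable by blast
lemma pxk_nn: "0 \<le> px x * k x t" using px_pos[of x] k_nn[of x t] by simp
lemma pk_nn: "0 \<le> p (x, y) * k x t" using pos[of "(x, y)"] k_nn[of x t] by simp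

lemma le1: "px x * k x t \<le> qt k t"
  unfolding qt_def using pxk_nn by (intro member_le_sum) auto
lemma le2: "p (x, y) * k x t \<le> qyt k y t"
  unfolding qyt_def using pk_nn by (intro member_le_sum) auto
lemma le3: "qyt k y t \<le> qt k t"
  unfolding qyt_def qt_def using p_le_px k_nn
  by (intro sum_mono mult_right_mono) auto
lemma qt_nn: "0 \<le> qt k t"
  unfolding qt_def using pxk_nn by (intro sum_nonneg) auto
lemma qyt_nn: "0 \<le> qyt k y t"
  unfolding qyt_def using pk_nn by (intro sum_nonneg) auto

definition "S1 x = (\<Sum>\<^sub>\<infinity>t. k x t * ln (k x t / qt k t))"
definition "S2 x y = (\<Sum>\<^sub>\<infinity>t. k x t * ln (k x t / qyt k y t))"
definition "SY y = (\<Sum>\<^sub>\<infinity>t. qyt k y t * ln (qyt k y t / (py y * qt k t)))"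

lemma S1_has: "((\<lambda>t. k x t * ln (k x t / qt k t)) has_sum S1 x) UNIV"
proof -
  have "(\<lambda>t. k x t * ln (k x t / qt k t)) summable_on UNIV"
    by (rule summable_xlnx[where c = "px x"]) (auto simp: k_nn px_pos le1 k_summ qt_summ)
  then show ?thesis unfolding S1_def by (simp add: summable_iff_has_sum_infsum[symmetric])
qed

lemma S2_has: "((\<lambda>t. k x t * ln (k x t / qyt k y t)) has_sum S2 x y) UNIV"
proof -
  have "(\<lambda>t. k x t * ln (k x t / qyt k y t)) summable_on UNIV"
    by (rule summable_xlnx[where c = "p (x, y)"]) (auto simp: k_nn pos le2 k_summ qyt_summ)
  then show ?thesis unfolding S2_def by (simp add: summable_iff_has_sum_infsum[symmetric])
qed

lemma SY_has: "((\<lambda>t. qyt k y t * ln (qyt k y t / (py y * qt k t))) has_sum SY y) UNIV"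
proof -
  have "(\<lambda>t. py y * qt k t) summable_on UNIV"
    using qt_summ by (rule summable_on_cmult_right)
  have "(\<lambda>t. qyt k y t * ln (qyt k y t / (py y * qt k t))) summable_on UNIV"
  proof (rule summable_xlnx[where c = "py y"])
    fix t show "py y * qyt k y t \<le> py y * qt k t"
      using py_pos[of y] le3[of y t] by (intro mult_left_mono) auto
  qed (auto simp: qyt_nn py_pos qyt_summ \<open>(\<lambda>t. py y * qt k t) summable_on UNIV\<close>)
  then show ?thesis unfolding SY_def by (simp add: summable_iff_has_sum_infsum[symmetric])
qed


lemma pw: "k x t * ln (qyt k y t / (py y * qt k t)) =
    k x t * ln (k x t / qt k t) - k x t * ln (k x t / qyt k y t) - k x t * ln (py y)"
proof (cases "k x t = 0")
  case True then show ?thesis by simp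
next
  case False
  then have k: "k x t > 0" using k_nn[of x t] by simp
  have q1: "qt k t > 0" using le1[of x t] px_pos[of x] k by (smt (verit) mult_pos_pos)
  have q2: "qyt k y t > 0" using le2[of x y t] pos[of "(x, y)"] k by (smt (verit) mult_pos_pos)
  have py: "py y > 0" by (rule py_pos)
  show ?thesis using k q1 q2 py by (simp add: ln_div ln_mult algebra_simps)
qed

lemma SY_eq: "SY y = (\<Sum>x\<in>UNIV. p (x, y) * (S1 x - S2 x y - ln (py y)))"
proof -
  have "((\<lambda>t. \<Sum>x\<in>UNIV. p (x, y) * (k x t * ln (k x t / qt k t) - k x t * ln (k x t / qyt k y t)
          - k x t * ln (py y))) has_sum (\<Sum>x\<in>UNIV. p (x, y) * (S1 x - S2 x y - 1 * ln (py y)))) UNIV"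
    by (intro has_sum_sum_fin has_sum_cmult_right has_sum_diff_real S1_has S2_has has_sum_cmult_left k_sum) auto
  moreover have "(\<lambda>t. \<Sum>x\<in>UNIV. p (x, y) * (k x t * ln (k x t / qt k t) - k x t * ln (k x t / qyt k y t)
          - k x t * ln (py y))) = (\<lambda>t. qyt k y t * ln (qyt k y t / (py y * qt k t)))"
  proof (rule ext)
    fix t
    have e: "qyt k y t * L = (\<Sum>x\<in>UNIV. p (x, y) * (k x t * L))" for L
      by (simp add: qyt_def sum_distrib_right mult.assoc)
    show "(\<Sum>x\<in>UNIV. p (x, y) * (k x t * ln (k x t / qt k t) - k x t * ln (k x t / qyt k y t)
          - k x t * ln (py y))) = qyt k y t * ln (qyt k y t / (py y * qt k t))"
      by (subst e) (simp only: pw)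
  qed
  ultimately show ?thesis using SY_has[of y] has_sum_unique by fastforce
qed

lemma gibbs: "S2 x y + ln (py y) \<ge> 0"
proof -
  have h1: "((\<lambda>t. k x t * ln (k x t / qyt k y t) + k x t * ln (py y)) has_sum (S2 x y + 1 * ln (py y))) UNIV"
    by (intro has_sum_add S2_has has_sum_cmult_left k_sum)
  have h2: "((\<lambda>t. k x t - qyt k y t / py y) has_sum (1 - py y / py y)) UNIV"
    by (intro has_sum_diff_real k_sum has_sum_cmult_left[where c = "1 / py y", simplified] qyt_sum)
  have "1 - py y / py y \<le> S2 x y + 1 * ln (py y)"
  proof (rule has_sum_mono[OF h2 h1])
    fix t
    have py: "py y > 0" by (rule py_pos)
    show "k x t - qyt k y t / py y \<le> k x t * ln (k x t / qyt k y t) + k x t * ln (py y)"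
    proof (cases "k x t = 0")
      case True then show ?thesis using qyt_nn[of y t] py by simp
    next
      case False
      then have k: "k x t > 0" using k_nn[of x t] by simp
      have q2: "qyt k y t > 0" using le2[of x y t] pos[of "(x, y)"] k by (smt (verit) mult_pos_pos)
      have "ln (qyt k y t / (k x t * py y)) \<le> qyt k y t / (k x t * py y) - 1"
        using k q2 py by (intro ln_le_minus_one) auto
      then have "k x t * ln (qyt k y t / (k x t * py y)) \<le> k x t * (qyt k y t / (k x t * py y) - 1)"
        using k by (intro mult_left_mono) auto
      also have "\<dots> = qyt k y t / py y - k x t" using k py by (simp add: field_simps)
      finally show ?thesis using k q2 py by (simp add: ln_div ln_mult algebra_simps)
    qed
  qed
  then show ?thesis using py_pos[of y] by simp
qed


definition "IXT = (\<Sum>x\<in>UNIV. px x * S1 x)"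
definition "IYT = (\<Sum>y\<in>UNIV. SY y)"
definition "OA = (\<Sum>x\<in>UNIV. \<Sum>y\<in>UNIV. p (x, y) * S2 x y)"
definition "CC = (\<Sum>x\<in>UNIV. \<Sum>y\<in>UNIV. p (x, y) * ln (py y))"

lemma OA_eq: "OA = IXT - IYT - CC"
proof -
  have "IYT = (\<Sum>x\<in>UNIV. \<Sum>y\<in>UNIV. p (x, y) * (S1 x - S2 x y - ln (py y)))"
    unfolding IYT_def SY_eq by (rule sum.swap)
  also have "\<dots> = (\<Sum>x\<in>UNIV. \<Sum>y\<in>UNIV. p (x, y) * S1 x) - OA - CC"
    by (simp add: right_diff_distrib sum_subtractf OA_def CC_def)
  also have "(\<Sum>x\<in>UNIV. \<Sum>y\<in>UNIV. p (x, y) * S1 x) = IXT"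
    by (simp add: IXT_def px_def sum_distrib_right)
  finally show ?thesis by simp
qed

lemma IYT_le: "IYT \<le> IXT"
proof -
  have "0 \<le> (\<Sum>x\<in>UNIV. \<Sum>y\<in>UNIV. p (x, y) * (S2 x y + ln (py y)))"
    using pos gibbs by (intro sum_nonneg mult_nonneg_nonneg) (auto intro: less_imp_le)
  also have "\<dots> = OA + CC"
    by (simp add: distrib_left sum.distrib OA_def CC_def)
  finally show ?thesis using OA_eq by simp
qed

lemma objB_eq: "objB p k = ereal IXT"
proof -
  have J: "(\<lambda>(x, t). \<Sum>y\<in>UNIV. p (x, y) * k x t) = (\<lambda>(x, t). px x * k x t)"
    by (rule ext) (auto simp: px_def sum_distrib_right split: prod.splits)
  have m1: "marg1 (\<lambda>(x, t). px x * k x t) = px"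
  proof (rule ext)
    fix x
    have "((\<lambda>t. px x * k x t) has_sum px x * 1) UNIV" by (intro has_sum_cmult_right k_sum)
    then show "marg1 (\<lambda>(x, t). px x * k x t) x = px x" unfolding marg1_def by (simp add: infsumI)
  qed
  have m2: "marg2 (\<lambda>(x, t). px x * k x t) = qt k"
    by (rule ext) (simp add: marg2_def qt_def)
  have hs: "((\<lambda>(x, t). px x * (k x t * ln (k x t / qt k t))) has_sum IXT) UNIV"
    unfolding IXT_def by (rule has_sum_prod_fin1) (simp add: has_sum_cmult_right S1_has)
  have "kl_div (\<lambda>(x, t). px x * k x t) (\<lambda>(a, b). px a * qt k b) = ereal IXT"
  proof (rule klI)
    fix z :: "'x \<times> nat"
    obtain x t where z: "z = (x, t)" by fastforce
    assume "(case z of (x, t) \<Rightarrow> px x * k x t) \<noteq> 0"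
    then have "k x t > 0" using z k_nn[of x t] by (auto simp: less_le)
    then have "qt k t > 0" using le1[of x t] px_pos[of x] by (smt (verit) mult_pos_pos)
    then show "(case z of (a, b) \<Rightarrow> px a * qt k b) \<noteq> 0" using z px_pos[of x] by simp
  next
    show "((\<lambda>z. (case z of (x, t) \<Rightarrow> px x * k x t) *
            ln ((case z of (x, t) \<Rightarrow> px x * k x t) / (case z of (a, b) \<Rightarrow> px a * qt k b))) has_sum IXT) UNIV"
      using hs by (subst has_sum_cong[where g = "\<lambda>(x, t). px x * (k x t * ln (k x t / qt k t))"])
        (auto simp: xlnx_cancel split: prod.splits)
  qed
  then show ?thesis unfolding objB_def mutual_info_def J m1 m2 .
qed


lemma IYT_mi: "mutual_info (\<lambda>(y, t). \<Sum>x\<in>UNIV. p (x, y) * k x t) = ereal IYT"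
proof -
  have J: "(\<lambda>(y, t). \<Sum>x\<in>UNIV. p (x, y) * k x t) = (\<lambda>(y, t). qyt k y t)"
    by (rule ext) (auto simp: qyt_def split: prod.splits)
  have m1: "marg1 (\<lambda>(y, t). qyt k y t) = py"
    by (rule ext) (simp add: marg1_def infsumI[OF qyt_sum])
  have m2: "marg2 (\<lambda>(y, t). qyt k y t) = qt k"
  proof (rule ext)
    fix t
    have "(\<Sum>y\<in>UNIV. \<Sum>x\<in>UNIV. p (x, y) * k x t) = (\<Sum>x\<in>UNIV. \<Sum>y\<in>UNIV. p (x, y) * k x t)"
      by (rule sum.swap)
    then show "marg2 (\<lambda>(y, t). qyt k y t) t = qt k t"
      by (simp add: marg2_def qyt_def qt_def px_def sum_distrib_right)
  qed
  have hs: "((\<lambda>(y, t). qyt k y t * ln (qyt k y t / (py y * qt k t))) has_sum IYT) UNIV"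
    unfolding IYT_def by (rule has_sum_prod_fin1) (simp add: SY_has)
  have "kl_div (\<lambda>(y, t). qyt k y t) (\<lambda>(a, b). py a * qt k b) = ereal IYT"
  proof (rule klI)
    fix z :: "'y \<times> nat"
    obtain y t where z: "z = (y, t)" by fastforce
    assume "(case z of (y, t) \<Rightarrow> qyt k y t) \<noteq> 0"
    then have "qyt k y t > 0" using z qyt_nn[of y t] by (auto simp: less_le)
    then have "qt k t > 0" using le3[of y t] by simp
    then show "(case z of (a, b) \<Rightarrow> py a * qt k b) \<noteq> 0" using z py_pos[of y] by simp
  next
    show "((\<lambda>z. (case z of (y, t) \<Rightarrow> qyt k y t) *
            ln ((case z of (y, t) \<Rightarrow> qyt k y t) / (case z of (a, b) \<Rightarrow> py a * qt k b))) has_sum IYT) UNIV"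
      using hs by (subst has_sum_cong[where g = "\<lambda>(y, t). qyt k y t * ln (qyt k y t / (py y * qt k t))"])
        (auto split: prod.splits)
  qed
  then show ?thesis unfolding mutual_info_def J m1 m2 .
qed

lemma constrB_iff: "constrB p lam k \<longleftrightarrow> lam \<le> IYT"
  unfolding constrB_def IYT_mi by simp

lemma marg1_p: "marg1 p = px"
  by (rule ext) (simp add: marg1_def px_def)
lemma marg2_p: "marg2 p = py"
  by (rule ext) (simp add: marg2_def py_def)

lemma constrA_iff: "constrA p lam (ib_ext k) \<longleftrightarrow> IYT = lam"
proof -
  have a1: "apply_chan (ib_ext k) p = (\<lambda>(t, y). qyt k y t)"
  proof (rule ext)
    fix z :: "nat \<times> 'y"
    obtain t y' where z: "z = (t, y')" by fastforce
    have "(\<Sum>y\<in>UNIV. k x t * (if y' = y then 1 else 0) * p (x, y)) = p (x, y') * k x t" for x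
    proof -
      have eq: "(\<lambda>y. k x t * (if y' = y then 1 else 0) * p (x, y)) = (\<lambda>y. if y' = y then p (x, y) * k x t else 0)"
        by auto
      show ?thesis unfolding eq by simp
    qed
    then show "apply_chan (ib_ext k) p z = (case z of (t, y) \<Rightarrow> qyt k y t)"
      using z by (simp add: apply_chan_def sum_pair ib_ext_def qyt_def)
  qed
  have a2: "apply_chan (ib_ext k) (\<lambda>(x, y). marg1 p x * marg2 p y) = (\<lambda>(t, y). py y * qt k t)"
  proof (rule ext)
    fix z :: "nat \<times> 'y"
    obtain t y' where z: "z = (t, y')" by fastforce
    have "(\<Sum>y\<in>UNIV. k x t * (if y' = y then 1 else 0) * (px x * py y)) = py y' * (px x * k x t)" for x
    proof -
      have eq: "(\<lambda>y. k x t * (if y' = y then 1 else 0) * (px x * py y)) = (\<lambda>y. if y' = y then py y * (px x * k x t) else 0)"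
        by auto
      show ?thesis unfolding eq by simp
    qed
    then show "apply_chan (ib_ext k) (\<lambda>(x, y). marg1 p x * marg2 p y) z = (case z of (t, y) \<Rightarrow> py y * qt k t)"
      using z by (simp add: apply_chan_def sum_pair ib_ext_def qt_def marg1_p marg2_p sum_distrib_left)
  qed
  have hs: "((\<lambda>(t, y). qyt k y t * ln (qyt k y t / (py y * qt k t))) has_sum IYT) UNIV"
    unfolding IYT_def by (rule has_sum_prod_fin2) (simp add: SY_has)
  have "kl_div (\<lambda>(t, y). qyt k y t) (\<lambda>(t, y). py y * qt k t) = ereal IYT"
  proof (rule klI)
    fix z :: "nat \<times> 'y"
    obtain t y where z: "z = (t, y)" by fastforce
    assume "(case z of (t, y) \<Rightarrow> qyt k y t) \<noteq> 0"
    then have "qyt k y t > 0" using z qyt_nn[of y t] by (auto simp: less_le)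
    then have "qt k t > 0" using le3[of y t] by simp
    then show "(case z of (t, y) \<Rightarrow> py y * qt k t) \<noteq> 0" using z py_pos[of y] by simp
  next
    show "((\<lambda>z. (case z of (t, y) \<Rightarrow> qyt k y t) *
            ln ((case z of (t, y) \<Rightarrow> qyt k y t) / (case z of (t, y) \<Rightarrow> py y * qt k t))) has_sum IYT) UNIV"
      using hs by (subst has_sum_cong[where g = "\<lambda>(t, y). qyt k y t * ln (qyt k y t / (py y * qt k t))"])
        (auto split: prod.splits)
  qed
  then show ?thesis unfolding constrA_def a1 a2 by simp
qed


lemma objA_eq: "objA p (ib_ext k) = ereal OA"
proof -
  define J where "J = (\<lambda>((x, y), (t, y')). p (x, y) * (k x t * (if y' = y then 1 else 0)))"
  have J_eq: "(\<lambda>(xy, t). p xy * ib_ext k xy t) = J"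
    by (rule ext) (auto simp: J_def ib_ext_def split: prod.splits)
  have m1: "marg1 J = p"
  proof (rule ext)
    fix a :: "'x \<times> 'y"
    obtain x y where a: "a = (x, y)" by fastforce
    have "((\<lambda>(t, y'). p (x, y) * (k x t * (if y' = y then 1 else 0))) has_sum
        (\<Sum>y'\<in>UNIV. p (x, y) * (1 * (if y' = y then 1 else 0)))) UNIV"
      by (rule has_sum_prod_fin2) (simp add: has_sum_cmult_right has_sum_cmult_left k_sum)
    moreover have "(\<Sum>y'\<in>UNIV. p (x, y) * (1 * (if y' = y then 1 else 0))) = p (x, y)"
      by (simp add: if_distrib cong: if_cong)
    ultimately show "marg1 J a = p a"
      unfolding marg1_def J_def a by (simp add: infsumI)
  qed
  have m2: "marg2 J = (\<lambda>(t, y). qyt k y t)"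
  proof (rule ext)
    fix z :: "nat \<times> 'y"
    obtain t y' where z: "z = (t, y')" by fastforce
    have "(\<Sum>y\<in>UNIV. p (x, y) * (k x t * (if y' = y then 1 else 0))) = p (x, y') * k x t" for x
    proof -
      have eq: "(\<lambda>y. p (x, y) * (k x t * (if y' = y then 1 else 0))) = (\<lambda>y. if y' = y then p (x, y) * k x t else 0)"
        by auto
      show ?thesis unfolding eq by simp
    qed
    then show "marg2 J z = (case z of (t, y) \<Rightarrow> qyt k y t)"
      using z by (simp add: marg2_def J_def sum_pair qyt_def)
  qed
  define g where "g = (\<lambda>((x, y), (t, y')). if y' = y then p (x, y) * (k x t * ln (k x t / qyt k y t)) else (0::real))"
  have hs: "(g has_sum OA) UNIV"
  proof -
    have "(g has_sum (\<Sum>a\<in>UNIV. (case a of (x, y) \<Rightarrow> p (x, y) * S2 x y))) UNIV"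
    proof (rule has_sum_prod_fin1)
      fix a :: "'x \<times> 'y"
      obtain x y where a: "a = (x, y)" by fastforce
      have "((\<lambda>b. g (a, b)) has_sum (\<Sum>y'\<in>UNIV. if y' = y then p (x, y) * S2 x y else 0)) UNIV"
      proof (rule has_sum_prod_fin2)
        fix y' :: 'y
        show "((\<lambda>t. g (a, (t, y'))) has_sum (if y' = y then p (x, y) * S2 x y else 0)) UNIV"
          by (cases "y' = y") (auto simp: g_def a has_sum_cmult_right S2_has)
      qed
      then show "((\<lambda>b. g (a, b)) has_sum (case a of (x, y) \<Rightarrow> p (x, y) * S2 x y)) UNIV"
        using a by simp
    qed
    moreover have "(\<Sum>a\<in>UNIV. (case a of (x, y) \<Rightarrow> p (x, y) * S2 x y)) = OA"
      unfolding OA_def by (simp add: sum_pair)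
    ultimately show ?thesis by simp
  qed
  have "kl_div J (\<lambda>(a, b). p a * (case b of (t, y) \<Rightarrow> qyt k y t)) = ereal OA"
  proof (rule klI)
    fix z :: "('x \<times> 'y) \<times> (nat \<times> 'y)"
    obtain x y t y' where z: "z = ((x, y), (t, y'))" by (metis prod.collapse)
    assume "J z \<noteq> 0"
    then have "y' = y" "k x t \<noteq> 0" using z by (auto simp: J_def split: if_splits)
    then have "k x t > 0" using k_nn[of x t] by simp
    then have "qyt k y t > 0" using le2[of x y t] pos[of "(x, y)"] by (smt (verit) mult_pos_pos)
    then show "(case z of (a, b) \<Rightarrow> p a * (case b of (t, y) \<Rightarrow> qyt k y t)) \<noteq> 0"
      using z \<open>y' = y\<close> pos[of "(x, y)"] by simp
  next
    show "((\<lambda>z. J z * ln (J z / (case z of (a, b) \<Rightarrow> p a * (case b of (t, y) \<Rightarrow> qyt k y t)))) has_sum OA) UNIV"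
    proof (subst has_sum_cong[where g = g])
      fix z :: "('x \<times> 'y) \<times> (nat \<times> 'y)"
      obtain x y t y' where z: "z = ((x, y), (t, y'))" by (metis prod.collapse)
      show "J z * ln (J z / (case z of (a, b) \<Rightarrow> p a * (case b of (t, y) \<Rightarrow> qyt k y t))) = g z"
        using z by (cases "y' = y") (auto simp: J_def g_def xlnx_cancel)
    qed (rule hs)
  qed
  then show ?thesis unfolding objA_def mutual_info_def J_eq m1 m2 .
qed

end

definition er :: "real \<Rightarrow> ('x \<Rightarrow> nat \<Rightarrow> real) \<Rightarrow> 'x \<Rightarrow> nat \<Rightarrow> real" where
  "er a k x t = (if t = 0 then 1 - a else a * k x (t - 1))"

lemma er_channel:
  assumes ch: "channel k" and a: "0 \<le> a" "a \<le> 1"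
  shows "channel (er a k)"
  unfolding channel_def
proof (intro allI conjI)
  fix x t show "0 \<le> er a k x t" using a k_nn[OF ch] by (simp add: er_def)
next
  fix x
  have "((\<lambda>t. (if t = 0 then 1 - a else 0) + (if t = 0 then 0 else a * k x (t - 1))) has_sum ((1 - a) + a * 1)) UNIV"
    by (intro has_sum_add has_sum_single0 has_sum_shift has_sum_cmult_right k_sum[OF ch])
  moreover have "(\<lambda>t. (if t = 0 then 1 - a else 0) + (if t = 0 then 0 else a * k x (t - 1))) = er a k x"
    by (rule ext) (simp add: er_def)
  ultimately show "(er a k x has_sum 1) UNIV" by simp
qed

lemma qt_er: "qt (er a k) t = (if t = 0 then 1 - a else a * qt k (t - 1))"
  by (simp add: qt_def er_def sum_distrib_left sum_distrib_right[symmetric] sum_px mult.left_commute)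

lemma qyt_er: "qyt (er a k) y t = (if t = 0 then (1 - a) * py y else a * qyt k y (t - 1))"
  by (simp add: qyt_def er_def py_def sum_distrib_left sum_distrib_right[symmetric] mult.left_commute mult.commute)

lemma zlnz: "z * ln (z / z) = 0" for z :: real
  by (cases "z = 0") auto

lemma S1_er:
  assumes ch: "channel k" and a: "0 \<le> a" "a \<le> 1"
  shows "S1 (er a k) x = a * S1 k x"
proof -
  have "((\<lambda>t. if t = 0 then 0 else a * (k x (t - 1) * ln (k x (t - 1) / qt k (t - 1)))) has_sum a * S1 k x) UNIV"
    by (intro has_sum_shift has_sum_cmult_right S1_has[OF ch])
  moreover have "(\<lambda>t. if t = 0 then 0 else a * (k x (t - 1) * ln (k x (t - 1) / qt k (t - 1))))
      = (\<lambda>t. er a k x t * ln (er a k x t / qt (er a k) t))"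
    by (rule ext) (simp add: qt_er er_def xlnx_cancel zlnz)
  ultimately show ?thesis unfolding S1_def[OF er_channel[OF assms]] by (simp add: infsumI)
qed

lemma SY_er:
  assumes ch: "channel k" and a: "0 \<le> a" "a \<le> 1"
  shows "SY (er a k) y = a * SY k y"
proof -
  have "((\<lambda>t. if t = 0 then 0 else a * (qyt k y (t - 1) * ln (qyt k y (t - 1) / (py y * qt k (t - 1))))) has_sum a * SY k y) UNIV"
    by (intro has_sum_shift has_sum_cmult_right SY_has[OF ch])
  moreover have "(\<lambda>t. if t = 0 then 0 else a * (qyt k y (t - 1) * ln (qyt k y (t - 1) / (py y * qt k (t - 1)))))
      = (\<lambda>t. qyt (er a k) y t * ln (qyt (er a k) y t / (py y * qt (er a k) t)))"
  proof (rule ext)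
    fix t
    show "(if t = 0 then 0 else a * (qyt k y (t - 1) * ln (qyt k y (t - 1) / (py y * qt k (t - 1)))))
      = qyt (er a k) y t * ln (qyt (er a k) y t / (py y * qt (er a k) t))"
    proof (cases "t = 0")
      case True
      then show ?thesis by (simp add: qt_er qyt_er mult.commute zlnz)
    next
      case False
      have "py y * (a * qt k (t - 1)) = a * (py y * qt k (t - 1))" by simp
      then show ?thesis using False by (simp add: qt_er qyt_er xlnx_cancel)
    qed
  qed
  ultimately show ?thesis unfolding SY_def[OF er_channel[OF assms]] by (simp add: infsumI)
qed

lemma IXT_er:
  assumes ch: "channel k" and a: "0 \<le> a" "a \<le> 1"
  shows "IXT (er a k) = a * IXT k"
  unfolding IXT_def[OF er_channel[OF assms]] IXT_def[OF ch] using S1_er[OF assms] by (simp add: sum_distrib_left mult.left_commute)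

lemma IYT_er:
  assumes ch: "channel k" and a: "0 \<le> a" "a \<le> 1"
  shows "IYT (er a k) = a * IYT k"
  unfolding IYT_def[OF er_channel[OF assms]] IYT_def[OF ch] using SY_er[OF assms] by (simp add: sum_distrib_left)


definition "C0 = (\<Sum>x\<in>UNIV. \<Sum>y\<in>UNIV. p (x, y) * ln (py y))"

lemma objA_val:
  assumes ch: "channel k"
  shows "objA p (ib_ext k) = ereal (IXT k - IYT k - C0)"
proof -
  have "CC = C0" unfolding CC_def[OF ch] C0_def ..
  then show ?thesis unfolding objA_eq[OF ch] OA_eq[OF ch] by simp
qed

lemma C_IB_D: "k' \<in> C_IB \<Longrightarrow> \<exists>kX'. channel kX' \<and> k' = ib_ext kX'"
  unfolding C_IB_def by blast

lemma C_IB_I: "channel k \<Longrightarrow> ib_ext k \<in> C_IB"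
  unfolding C_IB_def by blast

lemma main:
  assumes lam0: "0 \<le> lam" and ch: "channel kX"
  shows "solves_A p lam (ib_ext kX) \<longleftrightarrow> solves_B p lam kX"
proof
  assume A: "solves_A p lam (ib_ext kX)"
  then have "constrA p lam (ib_ext kX)" unfolding solves_A_def by blast
  then have eq: "IYT kX = lam" using constrA_iff[OF ch] by simp
  have opt: "IXT kX \<le> IXT k'" if ch': "channel k'" and c': "IYT k' = lam" for k'
  proof -
    have "constrA p lam (ib_ext k')" using constrA_iff[OF ch'] c' by simp
    then have "objA p (ib_ext kX) \<le> objA p (ib_ext k')"
      using A C_IB_I[OF ch'] unfolding solves_A_def by blast
    then show ?thesis using objA_val[OF ch] objA_val[OF ch'] eq c' by simp
  qed
  show "solves_B p lam kX"
    unfolding solves_B_def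
  proof (intro conjI allI impI)
    show "channel kX" by (rule ch)
    show "constrB p lam kX" using constrB_iff[OF ch] eq by simp
  next
    fix q' assume ch': "channel q'" and cq: "constrB p lam q'"
    define mu where "mu = IYT q'"
    have mu: "lam \<le> mu" using cq constrB_iff[OF ch'] mu_def by simp
    have "IXT kX \<le> IXT q'"
    proof (cases "mu = 0")
      case True
      then show ?thesis using opt[OF ch'] mu lam0 mu_def by simp
    next
      case False
      then have mupos: "mu > 0" using mu lam0 by simp
      define a where "a = lam / mu"
      have a1: "0 \<le> a" unfolding a_def using lam0 mupos by simp
      have a2: "a \<le> 1" unfolding a_def using mu mupos by (simp add: divide_le_eq)
      note a = a1 a2
      have "IYT (er a q') = lam" using IYT_er[OF ch' a] mupos by (simp add: a_def mu_def)
      then have "IXT kX \<le> IXT (er a q')" by (rule opt[OF er_channel[OF ch' a]])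
      also have "\<dots> = a * IXT q'" by (rule IXT_er[OF ch' a])
      also have "\<dots> \<le> IXT q'"
      proof -
        have "IXT q' \<ge> 0" using IYT_le[OF ch'] mupos mu_def by simp
        then show ?thesis using a by (simp add: mult_left_le_one_le)
      qed
      finally show ?thesis .
    qed
    then show "objB p kX \<le> objB p q'" using objB_eq[OF ch] objB_eq[OF ch'] by simp
  qed
next
  assume B: "solves_B p lam kX"
  have opt: "IXT kX \<le> IXT k'" if ch': "channel k'" and c': "lam \<le> IYT k'" for k'
  proof -
    have "constrB p lam k'" using constrB_iff[OF ch'] c' by simp
    then have "objB p kX \<le> objB p k'"
      using B ch' unfolding solves_B_def by blast
    then show ?thesis using objB_eq[OF ch] objB_eq[OF ch'] by simp
  qed
  have "constrB p lam kX" using B unfolding solves_B_def by blast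
  then have ge: "lam \<le> IYT kX" using constrB_iff[OF ch] by simp
  have eq: "IYT kX = lam"
  proof (rule ccontr)
    assume "IYT kX \<noteq> lam"
    then have gt: "lam < IYT kX" using ge by simp
    define a where "a = lam / IYT kX"
    have pos': "IYT kX > 0" using gt lam0 by simp
    have a1: "0 \<le> a" unfolding a_def using lam0 pos' by simp
    have a2: "a < 1" unfolding a_def using gt pos' by (simp add: divide_less_eq)
    have a: "0 \<le> a" "a \<le> 1" using a1 a2 by auto
    have "IYT (er a kX) = lam" using IYT_er[OF ch] a pos' by (simp add: a_def)
    then have "IXT kX \<le> IXT (er a kX)" by (intro opt[OF er_channel[OF ch a]]) simp
    also have "\<dots> = a * IXT kX" using IXT_er[OF ch] a by simp
    finally have "IXT kX \<le> a * IXT kX" .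
    moreover have "IXT kX > 0" using IYT_le[OF ch] pos' by simp
    moreover have "a * IXT kX < 1 * IXT kX"
      using a2 \<open>IXT kX > 0\<close> by (rule mult_strict_right_mono)
    ultimately show False by simp
  qed
  show "solves_A p lam (ib_ext kX)"
    unfolding solves_A_def
  proof (intro conjI ballI impI)
    show "ib_ext kX \<in> C_IB" by (rule C_IB_I[OF ch])
    show "constrA p lam (ib_ext kX)" using constrA_iff[OF ch] eq by simp
  next
    fix k' assume "k' \<in> C_IB" and ck: "constrA p lam k'"
    then obtain kX' where ch': "channel kX'" and k': "k' = ib_ext kX'" using C_IB_D by blast
    have c': "IYT kX' = lam" using ck constrA_iff[OF ch'] k' by simp
    then have "IXT kX \<le> IXT kX'" using opt[OF ch'] by simp
    then show "objA p (ib_ext kX) \<le> objA p k'"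
      using objA_val[OF ch] objA_val[OF ch'] k' eq c' by simp
  qed
qed

end

theorem proposition5:
  fixes p :: "'x::finite \<times> 'y::finite \<Rightarrow> real"
    and lam :: real
    and kX :: "'x \<Rightarrow> nat \<Rightarrow> real"
  assumes full_support: "\<forall>z. 0 < p z"
    and prob: "(\<Sum>z\<in>UNIV. p z) = 1"
    and lam_nonneg: "0 \<le> lam"
    and lam_le: "ereal lam \<le> mutual_info p"
    and kX_chan: "channel kX"
  shows "solves_A p lam (ib_ext kX) \<longleftrightarrow> solves_B p lam kX"
proof -
  interpret ib p using full_support prob by unfold_locales auto
  show ?thesis using main[OF lam_nonneg kX_chan] .
qed

end
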